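(* Let $|A|\ge2$, let $\mathcal F\subseteq\mathcal O(A)$ be a conservative clone with $\mathrm r(\mathcal F)=r\ge3$. Then there exist a Post class $P\in\{O_1,D_1,D_2,L_4\}$ and a surjective map $\tau\colon\mathcal F\to P$ such that for every $B\in[A]^2$, every bijection $\sigma\colon B\to\{0,1\}$, every $n$, every $f\in\mathcal F_{[n]}$ and every $\mathbf a\in B^n$, $$f(\mathbf a)=\sigma^{-1}\big(\tau(f)(\sigma(\mathbf a))\big),$$ where $\sigma(\mathbf a)$ is applied componentwise. Moreover, if $r\ge4$, then $P=O_1$ and every $f\in\mathcal F_{[n]}$ coincides with some projection $e^n_i$ on the set $A^n_{<r}$.
   Context: $\mathcal O(A)=\bigcup_{n<\omega}A^{A^n}$; $\mathcal F_{[n]}=\mathcal F\cap A^{A^n}$. $\mathrm{ran}\,\mathbf a$ is the set of entries of $\mathbf a\in A^n$; $A^n_{<r}=\{\mathbf a\in A^n: |\mathrm{ran}\,\mathbf a|<r\}$; $[A]^2$ the 2-element subsets of $A$. A clone with carrier $A$ is a subset of $\mathcal O(A)$ containing all projections $e^n_i(a_0\dots a_{n-1})=a_i$ and closed under composition. $f$ is conservative if $f(\mathbf a)\in\mathrm{ran}\,\mathbf a$ for all $\mathbf a$; a clone is conservative if all its members are. $\mathrm r(\mathcal F)$ is the least $r$ such that $\mathcal F$ contains an $r$-ary function that is not a projection ($\mathrm r(\mathcal F)=\omega$ if $\mathcal F$ consists of projections only). Post classes are clones on $\{0,1\}$: a Boolean function $g$ is self-dual if $g(1-x_0,\dots,1-x_{n-1})=1-g(x_0,\dots,x_{n-1})$;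 $O_1$ is the set of all Boolean projections; $D_1$ is the set of all self-dual Boolean functions $g$ with $g(0,\dots,0)=0$; $D_2$ is the set of all self-dual monotone Boolean functions; $L_4$ is the clone generated by $x\oplus y\oplus z$ (the functions $x_{i_1}\oplus\dots\oplus x_{i_k}$ with $k$ odd). *)

theory Defs
  imports Main "HOL-Library.Extended_Nat"
begin

text \<open>A finitary operation on a carrier: its arity n together with a function on lists.
  Extensional convention: the function is undefined off A^n.\<close>
type_synonym 'a oper = "nat \<times> ('a list \<Rightarrow> 'a)"

definition tuples :: "'a set \<Rightarrow> nat \<Rightarrow> 'a list set" where
  "tuples A n = {xs. length xs = n \<and> set xs \<subseteq> A}"

definition is_op :: "'a set \<Rightarrow> 'a oper \<Rightarrow> bool" where
  "is_op A f \<longleftrightarrow> (\<forall>xs\<in>tuples A (fst f). snd f xs \<in> A)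
     \<and> (\<forall>xs. xs \<notin> tuples A (fst f) \<longrightarrow> snd f xs = undefined)"

definition proj :: "'a set \<Rightarrow> nat \<Rightarrow> nat \<Rightarrow> 'a oper" where
  "proj A n i = (n, \<lambda>xs. if xs \<in> tuples A n then xs ! i else undefined)"

definition compose :: "'a set \<Rightarrow> nat \<Rightarrow> 'a oper \<Rightarrow> 'a oper list \<Rightarrow> 'a oper" where
  "compose A m f gs = (m, \<lambda>xs. if xs \<in> tuples A m
       then snd f (map (\<lambda>g. snd g xs) gs) else undefined)"

definition clone :: "'a set \<Rightarrow> 'a oper set \<Rightarrow> bool" where
  "clone A F \<longleftrightarrow> (\<forall>f\<in>F. is_op A f)
     \<and> (\<forall>n i. i < n \<longrightarrow> proj A n i \<in> F)
     \<and> (\<forall>f\<in>F. \<forall>m gs. length gs = fst f \<and> set gs \<subseteq> F \<and> (\<forall>g\<in>set gs. fst g = m)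
            \<longrightarrow> compose A m f gs \<in> F)"

definition conservative :: "'a set \<Rightarrow> 'a oper set \<Rightarrow> bool" where
  "conservative A F \<longleftrightarrow> (\<forall>f\<in>F. \<forall>xs\<in>tuples A (fst f). snd f xs \<in> set xs)"

definition is_projection :: "'a set \<Rightarrow> 'a oper \<Rightarrow> bool" where
  "is_projection A f \<longleftrightarrow> (\<exists>i<fst f. f = proj A (fst f) i)"

definition clone_rank :: "'a set \<Rightarrow> 'a oper set \<Rightarrow> enat" where
  "clone_rank A F = (if \<exists>f\<in>F. \<not> is_projection A f
      then enat (LEAST r. \<exists>f\<in>F. fst f = r \<and> \<not> is_projection A f) else \<infinity>)"

text \<open>Post classes; Boolean 0/1 are False/True.\<close>
definition self_dual :: "bool oper \<Rightarrow> bool" where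
  "self_dual g \<longleftrightarrow> (\<forall>xs\<in>tuples UNIV (fst g). snd g (map Not xs) = (\<not> snd g xs))"

definition monotone_bool :: "bool oper \<Rightarrow> bool" where
  "monotone_bool g \<longleftrightarrow> (\<forall>xs\<in>tuples UNIV (fst g). \<forall>ys\<in>tuples UNIV (fst g).
      (\<forall>i<fst g. xs ! i \<le> ys ! i) \<longrightarrow> snd g xs \<le> snd g ys)"

definition O1 :: "bool oper set" where
  "O1 = {proj UNIV n i | n i. i < n}"

definition D1 :: "bool oper set" where
  "D1 = {g. is_op UNIV g \<and> self_dual g \<and> snd g (replicate (fst g) False) = False}"

definition D2 :: "bool oper set" where
  "D2 = {g. is_op UNIV g \<and> self_dual g \<and> monotone_bool g}"

definition L4 :: "bool oper set" where
  "L4 = {(n, \<lambda>xs. if length xs = n then foldr (\<noteq>) (map (\<lambda>i. xs ! i) is) False else undefined)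
          | n is. odd (length is) \<and> set is \<subseteq> {..<n}}"

end

theory Submission
  imports Defs
begin


lemma tuples_UNIV: "tuples UNIV n = {xs. length xs = n}"
  by (auto simp: tuples_def)

lemma snd_compose: "xs \<in> tuples A m \<Longrightarrow> snd (compose A m f gs) xs = snd f (map (\<lambda>g. snd g xs) gs)"
  by (simp add: compose_def)

lemma snd_proj: "xs \<in> tuples A n \<Longrightarrow> snd (proj A n i) xs = xs ! i"
  by (simp add: proj_def)

lemma fst_compose[simp]: "fst (compose A m f gs) = m" by (simp add: compose_def)
lemma fst_proj[simp]: "fst (proj A n i) = n" by (simp add: proj_def)

lemma bop_eqI:
  assumes "is_op UNIV g" "is_op UNIV h" "fst g = fst h"
    and "\<And>xs. length xs = fst g \<Longrightarrow> snd g xs = snd h xs"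
  shows "g = h"
proof (rule prod_eqI)
  show "fst g = fst h" by fact
  show "snd g = snd h"
  proof
    fix xs show "snd g xs = snd h xs"
    proof (cases "length xs = fst g")
      case True then show ?thesis using assms(4) by blast
    next
      case False
      then have "xs \<notin> tuples UNIV (fst g)" "xs \<notin> tuples UNIV (fst h)"
        using assms(3) by (auto simp: tuples_UNIV)
      then show ?thesis using assms(1,2) by (simp add: is_op_def)
    qed
  qed
qed

definition maj3 :: "bool oper" where
  "maj3 = (3, \<lambda>xs. if length xs = 3 then (xs!0 \<and> xs!1) \<or> (xs!0 \<and> xs!2) \<or> (xs!1 \<and> xs!2) else undefined)"

definition xor3 :: "bool oper" where
  "xor3 = (3, \<lambda>xs. if length xs = 3 then xs!0 \<noteq> (xs!1 \<noteq> xs!2) else undefined)"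

lemma maj3_ev: "snd maj3 [a,b,c] = ((a \<and> b) \<or> (a \<and> c) \<or> (b \<and> c))" by (simp add: maj3_def)
lemma xor3_ev: "snd xor3 [a,b,c] = (a \<noteq> (b \<noteq> c))" by (simp add: xor3_def)
lemma fst_maj3[simp]: "fst maj3 = 3" by (simp add: maj3_def)
lemma fst_xor3[simp]: "fst xor3 = 3" by (simp add: xor3_def)

lemma is_op_maj3: "is_op UNIV maj3" by (auto simp: is_op_def maj3_def tuples_UNIV)
lemma is_op_xor3: "is_op UNIV xor3" by (auto simp: is_op_def xor3_def tuples_UNIV)
lemma is_op_proj: "is_op A (proj A n i) \<or> True" by simp
lemma is_op_projU: "is_op UNIV (proj UNIV n i)" by (auto simp: is_op_def proj_def tuples_UNIV)

lemma len3E: assumes "length xs = 3" obtains x y z where "xs = [x,y,z]"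
proof -
  from assms obtain x r where "xs = x # r" by (cases xs) auto
  moreover from assms this obtain y r' where "r = y # r'" by (cases r) auto
  moreover from assms calculation obtain z where "r' = [z]" by (cases r') auto
  ultimately show ?thesis using that by blast
qed

lemma D1_ar3_eval:
  assumes "g \<in> D1" "fst g = 3"
  shows "snd g [x,y,z] = (if y=z then (if x=y then x else (x = snd g [True,False,False]))
      else if x=z then (y = snd g [False,True,False]) else (z = snd g [False,False,True]))"
proof -
  have sd: "\<And>a b c. snd g [\<not>a,\<not>b,\<not>c] = (\<not> snd g [a,b,c])"
  proof -
    fix a b c
    have "\<forall>xs. length xs = 3 \<longrightarrow> snd g (map Not xs) = (\<not> snd g xs)"
      using assms by (auto simp: D1_def self_dual_def tuples_UNIV)
    from spec[OF this, of "[a,b,c]"] show "snd g [\<not>a,\<not>b,\<not>c] = (\<not> snd g [a,b,c])" by simp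
  qed
  have z: "snd g [False,False,False] = False"
    using assms by (simp add: D1_def numeral_3_eq_3)
  show ?thesis
    using sd[of False False False] sd[of True False False] sd[of False True False] sd[of False False True] z
    by (cases x; cases y; cases z) auto
qed

lemma D1_ar3_eval':
  assumes "g \<in> D1" "fst g = 3" "snd g [True,False,False] = a" "snd g [False,True,False] = b"
    "snd g [False,False,True] = c"
  shows "snd g [x,y,z] = (if y=z then (if x=y then x else (x = a))
      else if x=z then (y = b) else (z = c))"
  using D1_ar3_eval[OF assms(1,2), of x y z] assms(3-5) by simp

lemma D1_is_op: "g \<in> D1 \<Longrightarrow> is_op UNIV g" by (simp add: D1_def)

lemma clone_is_op: "clone A C \<Longrightarrow> g \<in> C \<Longrightarrow> is_op A g" by (simp add: clone_def)
lemma clone_proj: "clone A C \<Longrightarrow> i < n \<Longrightarrow> proj A n i \<in> C" by (simp add: clone_def)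
lemma clone_comp: "clone A C \<Longrightarrow> f \<in> C \<Longrightarrow> length gs = fst f \<Longrightarrow> set gs \<subseteq> C \<Longrightarrow> (\<forall>g\<in>set gs. fst g = m)
  \<Longrightarrow> compose A m f gs \<in> C" by (simp add: clone_def)

lemma sig_maj:
  assumes "g \<in> D1" "fst g = 3" "\<not> snd g [True,False,False]" "\<not> snd g [False,True,False]" "\<not> snd g [False,False,True]"
  shows "g = maj3"
proof (rule bop_eqI)
  show "is_op UNIV g" using assms by (simp add: D1_def)
  show "is_op UNIV maj3" by (rule is_op_maj3)
  show "fst g = fst maj3" using assms by simp
  fix xs :: "bool list" assume "length xs = fst g"
  then obtain x y z where xs: "xs = [x,y,z]" using assms(2) len3E by metis
  have e: "snd g [x,y,z] = (if y=z then (if x=y then x else (x = False))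
      else if x=z then (y = False) else (z = False))"
    by (rule D1_ar3_eval'[OF assms(1,2)]) (use assms(3-5) in auto)
  show "snd g xs = snd maj3 xs" unfolding xs maj3_ev e
    by (cases x; cases y; cases z) auto
qed

lemma sig_xor:
  assumes "g \<in> D1" "fst g = 3" "snd g [True,False,False]" "snd g [False,True,False]" "snd g [False,False,True]"
  shows "g = xor3"
proof (rule bop_eqI)
  show "is_op UNIV g" using assms by (simp add: D1_def)
  show "is_op UNIV xor3" by (rule is_op_xor3)
  show "fst g = fst xor3" using assms by simp
  fix xs :: "bool list" assume "length xs = fst g"
  then obtain x y z where xs: "xs = [x,y,z]" using assms(2) len3E by metis
  have e: "snd g [x,y,z] = (if y=z then (if x=y then x else (x = True))
      else if x=z then (y = True) else (z = True))"
    by (rule D1_ar3_eval'[OF assms(1,2)]) (use assms(3-5) in auto)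
  show "snd g xs = snd xor3 xs" unfolding xs xor3_ev e
    by (cases x; cases y; cases z) auto
qed

lemma t3: "[x,y,z::bool] \<in> tuples UNIV 3" by (simp add: tuples_UNIV)

lemma sig_h:
  assumes C: "clone UNIV C" "C \<subseteq> D1" and g: "g \<in> C" "fst g = 3"
    and s: "snd g [True,False,False]" "snd g [False,True,False]" "\<not> snd g [False,False,True]"
  shows "maj3 \<in> C \<and> xor3 \<in> C"
proof -
  have gD: "g \<in> D1" using C g by blast
  have ev: "\<And>x y z. snd g [x,y,z] = (if y=z then (if x=y then x else (x = True))
      else if x=z then (y = True) else (z = False))"
    by (rule D1_ar3_eval'[OF gD g(2)]) (use s in auto)
  have p: "\<And>i. i < 3 \<Longrightarrow> proj UNIV 3 i \<in> C" using C(1) clone_proj by blast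
  define m where "m = compose UNIV 3 g [proj UNIV 3 0, proj UNIV 3 1, g]"
  have mC: "m \<in> C" unfolding m_def
    by (rule clone_comp[OF C(1) g(1)]) (auto simp: g p)
  have "m = maj3"
  proof (rule bop_eqI)
    show "is_op UNIV m" using clone_is_op[OF C(1) mC] .
    show "is_op UNIV maj3" by (rule is_op_maj3)
    show "fst m = fst maj3" by (simp add: m_def)
    fix xs :: "bool list" assume "length xs = fst m"
    then obtain x y z where xs: "xs = [x,y,z]" using len3E by (metis fst_compose m_def)
    show "snd m xs = snd maj3 xs" unfolding xs m_def snd_compose[OF t3]
      by (simp add: snd_proj[OF t3] ev maj3_ev)
  qed
  with mC have majC: "maj3 \<in> C" by simp
  define x where "x = compose UNIV 3 g [proj UNIV 3 0, compose UNIV 3 g [proj UNIV 3 1, proj UNIV 3 2, proj UNIV 3 0], maj3]"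
  have g2C: "compose UNIV 3 g [proj UNIV 3 1, proj UNIV 3 2, proj UNIV 3 0] \<in> C"
    by (rule clone_comp[OF C(1) g(1)]) (auto simp: g p)
  have xC: "x \<in> C" unfolding x_def
    by (rule clone_comp[OF C(1) g(1)]) (use g2C majC p g in auto)
  have "x = xor3"
  proof (rule bop_eqI)
    show "is_op UNIV x" using clone_is_op[OF C(1) xC] .
    show "is_op UNIV xor3" by (rule is_op_xor3)
    show "fst x = fst xor3" by (simp add: x_def)
    fix xs :: "bool list" assume "length xs = fst x"
    then obtain a b c where xs: "xs = [a,b,c]" using len3E by (metis fst_compose x_def)
    show "snd x xs = snd xor3 xs" unfolding xs x_def snd_compose[OF t3]
      by (simp add: snd_compose[OF t3] snd_proj[OF t3] ev maj3_ev xor3_ev)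
  qed
  with xC have "xor3 \<in> C" by simp
  with majC show ?thesis by simp
qed



lemma mono_P:
  fixes n :: nat
  assumes cp: "\<And>S. S \<subseteq> {..<n} \<Longrightarrow> P ({..<n} - S) = (\<not> P S)"
  and am: "\<And>X Y Z. X \<union> Y \<union> Z = {..<n} \<Longrightarrow> X \<inter> Y = {} \<Longrightarrow> X \<inter> Z = {} \<Longrightarrow> Y \<inter> Z = {}
     \<Longrightarrow> \<not> (P X \<and> P Z)"
  and "S \<subseteq> T" "T \<subseteq> {..<n}" "P S" shows "P T"
proof -
  have "\<not> (P S \<and> P ({..<n} - T))"
    by (rule am[of S "T - S" "{..<n} - T"]) (use assms(3,4) in auto)
  with cp[OF assms(4)] assms(5) show ?thesis by simp
qed

lemma ultra_P:
  fixes n :: nat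
  assumes cp: "\<And>S. S \<subseteq> {..<n} \<Longrightarrow> P ({..<n} - S) = (\<not> P S)"
  and am: "\<And>X Y Z. X \<union> Y \<union> Z = {..<n} \<Longrightarrow> X \<inter> Y = {} \<Longrightarrow> X \<inter> Z = {} \<Longrightarrow> Y \<inter> Z = {}
     \<Longrightarrow> \<not> (P X \<and> P Z)"
  and al: "\<And>X Y Z. X \<union> Y \<union> Z = {..<n} \<Longrightarrow> X \<inter> Y = {} \<Longrightarrow> X \<inter> Z = {} \<Longrightarrow> Y \<inter> Z = {}
     \<Longrightarrow> P X \<or> P Y \<or> P Z"
  and p0: "\<not> P {}"
  shows "\<exists>i<n. \<forall>T. T \<subseteq> {..<n} \<longrightarrow> P T = (i \<in> T)"
proof -
  have key: "\<forall>S. card S = k \<longrightarrow> S \<subseteq> {..<n} \<longrightarrow> P S \<longrightarrow> (\<exists>i\<in>S. P {i})" for k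
  proof (induction k rule: less_induct)
    case (less k)
    show ?case
    proof (intro allI impI)
      fix S assume cS: "card S = k" and Sn: "S \<subseteq> {..<n}" and PS: "P S"
      have finS: "finite S" using Sn finite_subset by blast
      from PS p0 have "S \<noteq> {}" by auto
      then obtain i where iS: "i \<in> S" by blast
      have "P ({..<n} - S) = False" using cp[OF Sn] PS by simp
      moreover have "P {i} \<or> P (S - {i}) \<or> P ({..<n} - S)"
      proof -
        have eq: "{i} \<union> (S - {i}) \<union> ({..<n} - S) = {..<n}" using iS Sn by blast
        show ?thesis by (rule al[OF eq]) (use iS in auto)
      qed
      ultimately have "P {i} \<or> P (S - {i})" by simp
      then show "\<exists>i\<in>S. P {i}"
      proof
        assume "P {i}" with iS show ?thesis by blast
      next
        assume P2: "P (S - {i})"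
        have "card (S - {i}) < k" using card_Diff1_less[OF finS iS] cS by simp
        have "S - {i} \<subseteq> {..<n}" using Sn by blast
        from less.IH[OF \<open>card (S - {i}) < k\<close>, rule_format, OF refl this P2]
        obtain j where "j \<in> S - {i}" "P {j}" by blast
        then show ?thesis by blast
      qed
    qed
  qed
  have mono: "P T" if a: "S \<subseteq> T" "T \<subseteq> {..<n}" "P S" for S T
    by (rule mono_P[of n P S T, OF cp am a])
  have Pn: "P {..<n}" using cp[of "{}"] p0 by simp
  from key[rule_format, OF refl _ Pn] obtain i where i0: "i \<in> {..<n}" "P {i}" by blast
  then have i: "i < n" "P {i}" by auto
  have "\<forall>T. T \<subseteq> {..<n} \<longrightarrow> P T = (i \<in> T)"
  proof (intro allI impI)
    fix T assume Tn: "T \<subseteq> {..<n}"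
    show "P T = (i \<in> T)"
    proof
      assume iT: "i \<in> T"
      show "P T"
        by (rule mono) (use iT Tn i in auto)
    next
      assume PT: "P T"
      show "i \<in> T"
      proof (rule ccontr)
        assume "i \<notin> T"
        then have "T \<subseteq> {..<n} - {i}" using Tn by auto
        then have "P ({..<n} - {i})"
          by (rule mono) (use PT in auto)
        moreover have "P ({..<n} - {i}) = (\<not> P {i})" using cp[of "{i}"] i by simp
        ultimately show False using i by simp
      qed
    qed
  qed
  with i show ?thesis by blast
qed

lemma parity_P:
  fixes n :: nat
  assumes cp: "\<And>S. S \<subseteq> {..<n} \<Longrightarrow> P ({..<n} - S) = (\<not> P S)"
  and par: "\<And>X Y Z. X \<union> Y \<union> Z = {..<n} \<Longrightarrow> X \<inter> Y = {} \<Longrightarrow> X \<inter> Z = {} \<Longrightarrow> Y \<inter> Z = {}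
     \<Longrightarrow> P X \<noteq> (P Y \<noteq> P Z)"
  and p0: "\<not> P {}"
  and Sn: "S \<subseteq> {..<n}"
  shows "P S = odd (card {i\<in>S. P {i}})"
proof -
  have un: "P (X \<union> Y) = (P X \<noteq> P Y)" if "X \<inter> Y = {}" "X \<union> Y \<subseteq> {..<n}" for X Y
  proof -
    have "P X \<noteq> (P Y \<noteq> P ({..<n} - (X \<union> Y)))"
      by (rule par) (use that in auto)
    with cp[OF that(2)] show ?thesis by auto
  qed
  have "finite S" using Sn finite_subset by blast
  from this Sn show ?thesis
  proof (induction S rule: finite_induct)
    case empty then show ?case using p0 by simp
  next
    case (insert j S)
    have e: "insert j S = {j} \<union> S" by simp
    have PI: "P (insert j S) = (P {j} \<noteq> P S)"
      unfolding e by (rule un) (use insert in auto)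
    have fin: "finite {i\<in>S. P {i}}" using insert by simp
    show ?case
    proof (cases "P {j}")
      case True
      then have "{i\<in>insert j S. P {i}} = insert j {i\<in>S. P {i}}" by auto
      then have "card {i\<in>insert j S. P {i}} = Suc (card {i\<in>S. P {i}})"
        using fin insert by simp
      then show ?thesis using PI True insert by simp
    next
      case False
      then have "{i\<in>insert j S. P {i}} = {i\<in>S. P {i}}" by auto
      then show ?thesis using PI False insert by simp
    qed
  qed
qed

definition ind :: "nat \<Rightarrow> nat set \<Rightarrow> bool list" where
  "ind n S = map (\<lambda>i. i \<in> S) [0..<n]"

lemma ind_len[simp]: "length (ind n S) = n" by (simp add: ind_def)
lemma ind_tup: "ind n S \<in> tuples UNIV n" by (simp add: tuples_UNIV)
lemma ind_compl: "map Not (ind n S) = ind n ({..<n} - S)"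
  by (simp add: ind_def)
lemma ind_empty: "ind n {} = replicate n False"
  by (simp add: ind_def map_replicate_const)
lemma list_ind: "length xs = n \<Longrightarrow> xs = ind n {i. i < n \<and> xs ! i}"
  by (rule nth_equalityI) (auto simp: ind_def)

lemma D1_P:
  assumes "f \<in> D1" "fst f = n"
  shows "\<And>S. S \<subseteq> {..<n} \<Longrightarrow> snd f (ind n ({..<n} - S)) = (\<not> snd f (ind n S))"
    and "\<not> snd f (ind n {})"
proof -
  fix S
  have "snd f (map Not (ind n S)) = (\<not> snd f (ind n S))"
    using assms ind_tup[of n S] by (auto simp: D1_def self_dual_def)
  then show "snd f (ind n ({..<n} - S)) = (\<not> snd f (ind n S))" by (simp add: ind_compl)
next
  show "\<not> snd f (ind n {})" using assms by (simp add: D1_def ind_empty)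
qed

lemma foldr_xor: "foldr (\<noteq>) bs False = odd (length (filter id bs))"
  by (induction bs) auto



lemma minor:
  assumes C: "clone UNIV C" and f: "f \<in> C" "fst f = n"
    and part: "X \<union> Y \<union> Z = {..<n}" "X \<inter> Y = {}" "X \<inter> Z = {}" "Y \<inter> Z = {}"
  shows "\<exists>g\<in>C. fst g = 3 \<and> snd g [True,False,False] = snd f (ind n X)
     \<and> snd g [False,True,False] = snd f (ind n Y) \<and> snd g [False,False,True] = snd f (ind n Z)"
proof -
  define l where "l i = (if i \<in> X then 0 else if i \<in> Y then 1 else (2::nat))" for i
  define g where "g = compose UNIV 3 f (map (\<lambda>i. proj UNIV 3 (l i)) [0..<n])"
  have lt: "l i < 3" for i by (simp add: l_def)
  have gC: "g \<in> C" unfolding g_def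
  proof (rule clone_comp[OF C f(1)])
    have p: "\<And>i. proj UNIV 3 (l i) \<in> C" using clone_proj[OF C lt] .
    show "set (map (\<lambda>i. proj UNIV 3 (l i)) [0..<n]) \<subseteq> C" using p by auto
  qed (auto simp: f(2))
  have ev: "snd g [a,b,c] = snd f (map (\<lambda>i. [a,b,c] ! l i) [0..<n])" for a b c
    unfolding g_def by (simp add: snd_compose[OF t3] snd_proj[OF t3] comp_def)
  have e1: "map (\<lambda>i. [True,False,False] ! l i) [0..<n] = ind n X"
    unfolding ind_def by (rule map_cong) (auto simp: l_def)
  have e2: "map (\<lambda>i. [False,True,False] ! l i) [0..<n] = ind n Y"
    unfolding ind_def by (rule map_cong) (use part(2) in \<open>auto simp: l_def\<close>)
  have e3: "map (\<lambda>i. [False,False,True] ! l i) [0..<n] = ind n Z"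
    unfolding ind_def by (rule map_cong) (use part in \<open>auto simp: l_def\<close>)
  have fg: "fst g = 3" by (simp add: g_def)
  show ?thesis
  proof (intro bexI[OF _ gC] conjI)
    show "fst g = 3" by (rule fg)
    show "snd g [True,False,False] = snd f (ind n X)" by (simp only: ev e1)
    show "snd g [False,True,False] = snd f (ind n Y)" by (simp only: ev e2)
    show "snd g [False,False,True] = snd f (ind n Z)" by (simp only: ev e3)
  qed
qed

definition rot :: "bool oper \<Rightarrow> bool oper" where
  "rot g = compose UNIV 3 g [proj UNIV 3 1, proj UNIV 3 2, proj UNIV 3 0]"

lemma rot_C: assumes C: "clone UNIV C" and "g \<in> C" "fst g = 3" shows "rot g \<in> C"
proof -
  have p: "\<And>i. i < 3 \<Longrightarrow> proj UNIV 3 i \<in> C" using C clone_proj by blast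
  show ?thesis unfolding rot_def by (rule clone_comp[OF C assms(2)]) (use p assms(3) in auto)
qed

lemma rot_ev: "snd (rot g) [x,y,z] = snd g [y,z,x]"
  by (simp add: rot_def snd_compose[OF t3] snd_proj[OF t3])
lemma fst_rot[simp]: "fst (rot g) = 3" by (simp add: rot_def)

lemma sig_cases:
  assumes C: "clone UNIV C" "C \<subseteq> D1" and g: "g \<in> C" "fst g = 3"
  defines "a \<equiv> snd g [True,False,False]" and "b \<equiv> snd g [False,True,False]" and "c \<equiv> snd g [False,False,True]"
  shows "(xor3 \<notin> C \<longrightarrow> \<not> (a \<and> c)) \<and> (maj3 \<notin> C \<longrightarrow> (a \<or> b \<or> c) \<and> (a \<noteq> (b \<noteq> c)))"
proof -
  have gD: "g \<in> D1" using C g by blast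
  have r1: "rot g \<in> C" using rot_C[OF C(1) g] .
  have r2: "rot (rot g) \<in> C" using rot_C[OF C(1) r1] by simp
  have H: "maj3 \<in> C \<and> xor3 \<in> C" if "(a \<and> b \<and> \<not> c) \<or> (a \<and> \<not> b \<and> c) \<or> (\<not> a \<and> b \<and> c)"
  proof -
    { assume "a \<and> b \<and> \<not> c"
      then have ?thesis using sig_h[OF C g] by (simp add: a_def b_def c_def) }
    moreover
    { assume h: "a \<and> \<not> b \<and> c"
      have ?thesis by (rule sig_h[OF C r1]) (use h in \<open>simp_all add: rot_ev a_def b_def c_def\<close>) }
    moreover
    { assume h: "\<not> a \<and> b \<and> c"
      have ?thesis by (rule sig_h[OF C r2]) (use h in \<open>simp_all add: rot_ev a_def b_def c_def\<close>) }
    ultimately show ?thesis using that by blast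
  qed
  have M: "maj3 \<in> C" if "\<not> a" "\<not> b" "\<not> c"
    using sig_maj[OF gD g(2)] that g(1) by (simp add: a_def b_def c_def)
  have X: "xor3 \<in> C" if "a" "b" "c"
    using sig_xor[OF gD g(2)] that g(1) by (simp add: a_def b_def c_def)
  show ?thesis using H M X by (cases a; cases b; cases c) auto
qed

lemma sig_part:
  assumes C: "clone UNIV C" "C \<subseteq> D1" and f: "f \<in> C" "fst f = n"
    and part: "X \<union> Y \<union> Z = {..<n}" "X \<inter> Y = {}" "X \<inter> Z = {}" "Y \<inter> Z = {}"
  shows "(xor3 \<notin> C \<longrightarrow> \<not> (snd f (ind n X) \<and> snd f (ind n Z)))
     \<and> (maj3 \<notin> C \<longrightarrow> (snd f (ind n X) \<or> snd f (ind n Y) \<or> snd f (ind n Z))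
          \<and> (snd f (ind n X) \<noteq> (snd f (ind n Y) \<noteq> snd f (ind n Z))))"
proof -
  obtain g where "g \<in> C" "fst g = 3" "snd g [True,False,False] = snd f (ind n X)"
     "snd g [False,True,False] = snd f (ind n Y)" "snd g [False,False,True] = snd f (ind n Z)"
    using minor[OF C(1) f part] by blast
  note g = this
  show ?thesis using sig_cases[OF C g(1,2)] unfolding g(3-5) .
qed

lemma C_sub_O1:
  assumes C: "clone UNIV C" "C \<subseteq> D1" and nm: "maj3 \<notin> C" and nx: "xor3 \<notin> C" and f: "f \<in> C"
  shows "f \<in> O1"
proof -
  define n where "n = fst f"
  have fD: "f \<in> D1" using C f by blast
  note sp = sig_part[OF C f n_def[symmetric]]
  have am: "\<not> (snd f (ind n X) \<and> snd f (ind n Z))"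
    if "X \<union> Y \<union> Z = {..<n}" "X \<inter> Y = {}" "X \<inter> Z = {}" "Y \<inter> Z = {}" for X Y Z
    using sp[OF that] nx by simp
  have al: "snd f (ind n X) \<or> snd f (ind n Y) \<or> snd f (ind n Z)"
    if "X \<union> Y \<union> Z = {..<n}" "X \<inter> Y = {}" "X \<inter> Z = {}" "Y \<inter> Z = {}" for X Y Z
    using sp[OF that] nm by blast
  have ex: "\<exists>i<n. \<forall>T. T \<subseteq> {..<n} \<longrightarrow> snd f (ind n T) = (i \<in> T)"
    by (rule ultra_P[of n "\<lambda>S. snd f (ind n S)"], fact D1_P(1)[OF fD n_def[symmetric]],
        fact am, fact al, fact D1_P(2)[OF fD n_def[symmetric]])
  then obtain i where i: "i < n" "\<forall>T. T \<subseteq> {..<n} \<longrightarrow> snd f (ind n T) = (i \<in> T)"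
    by blast
  have "f = proj UNIV n i"
  proof (rule bop_eqI)
    show "is_op UNIV f" using fD by (simp add: D1_def)
    show "is_op UNIV (proj UNIV n i)" by (rule is_op_projU)
    show "fst f = fst (proj UNIV n i)" by (simp add: n_def)
    fix xs :: "bool list" assume l: "length xs = fst f"
    have ln: "length xs = n" using l n_def by simp
    have sub: "{j. j < n \<and> xs ! j} \<subseteq> {..<n}" by auto
    have "snd f xs = snd f (ind n {j. j < n \<and> xs ! j})" by (rule arg_cong[OF list_ind[OF ln]])
    also have "\<dots> = (i \<in> {j. j < n \<and> xs ! j})" by (rule i(2)[rule_format, OF sub])
    also have "\<dots> = snd (proj UNIV n i) xs" using i l by (simp add: snd_proj tuples_UNIV n_def)
    finally show "snd f xs = snd (proj UNIV n i) xs" .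
  qed
  then show ?thesis unfolding O1_def using i(1) by blast
qed

lemma C_sub_D2:
  assumes C: "clone UNIV C" "C \<subseteq> D1" and nx: "xor3 \<notin> C" and f: "f \<in> C"
  shows "f \<in> D2"
proof -
  define n where "n = fst f"
  have fD: "f \<in> D1" using C f by blast
  note sp = sig_part[OF C f n_def[symmetric]]
  have am: "\<not> (snd f (ind n X) \<and> snd f (ind n Z))"
    if "X \<union> Y \<union> Z = {..<n}" "X \<inter> Y = {}" "X \<inter> Z = {}" "Y \<inter> Z = {}" for X Y Z
    using sp[OF that] nx by simp
  have mono: "snd f (ind n T)" if "S \<subseteq> T" "T \<subseteq> {..<n}" "snd f (ind n S)" for S T
    using mono_P[of n "\<lambda>S. snd f (ind n S)" S T, OF D1_P(1)[OF fD n_def[symmetric]] am that] .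
  have "monotone_bool f"
    unfolding monotone_bool_def
  proof (intro ballI impI)
    fix xs ys :: "bool list" assume xs: "xs \<in> tuples UNIV (fst f)" and ys: "ys \<in> tuples UNIV (fst f)"
      and le: "\<forall>i<fst f. xs ! i \<le> ys ! i"
    have lx: "length xs = n" and ly: "length ys = n" using xs ys by (auto simp: tuples_UNIV n_def)
    have ex: "snd f xs = snd f (ind n {j. j < n \<and> xs ! j})" by (rule arg_cong[OF list_ind[OF lx]])
    have ey: "snd f ys = snd f (ind n {j. j < n \<and> ys ! j})" by (rule arg_cong[OF list_ind[OF ly]])
    have sub: "{j. j < n \<and> xs ! j} \<subseteq> {j. j < n \<and> ys ! j}" using le by (auto simp: n_def le_bool_def)
    show "snd f xs \<le> snd f ys" unfolding ex ey le_bool_def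
      using mono[OF sub] by auto
  qed
  then show ?thesis using fD by (simp add: D1_def D2_def)
qed

lemma C_sub_L4:
  assumes C: "clone UNIV C" "C \<subseteq> D1" and nm: "maj3 \<notin> C" and f: "f \<in> C"
  shows "f \<in> L4"
proof -
  define n where "n = fst f"
  define P where "P S = snd f (ind n S)" for S
  have fD: "f \<in> D1" using C f by blast
  note sp = sig_part[OF C f n_def[symmetric]]
  have par: "P S = odd (card {i\<in>S. P {i}})" if "S \<subseteq> {..<n}" for S
  proof -
    have pr: "snd f (ind n X) \<noteq> (snd f (ind n Y) \<noteq> snd f (ind n Z))"
      if "X \<union> Y \<union> Z = {..<n}" "X \<inter> Y = {}" "X \<inter> Z = {}" "Y \<inter> Z = {}" for X Y Z
      using sp[OF that] nm by simp
    show ?thesis unfolding P_def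
      by (rule parity_P[of n "\<lambda>S. snd f (ind n S)", OF D1_P(1)[OF fD n_def[symmetric]] pr
        D1_P(2)[OF fD n_def[symmetric]] that])
  qed
  define "is" where "is = filter (\<lambda>i. P {i}) [0..<n]"
  have cardeq: "card {i\<in>S. P {i}} = length (filter (\<lambda>i. i \<in> S) is)" if "S \<subseteq> {..<n}" for S
  proof -
    have "{i\<in>S. P {i}} = set (filter (\<lambda>i. i \<in> S) is)" using that by (auto simp: is_def)
    moreover have "distinct (filter (\<lambda>i. i \<in> S) is)" by (simp add: is_def)
    ultimately show ?thesis by (metis distinct_card)
  qed
  have Pn: "P {..<n}" using D1_P[OF fD n_def[symmetric]] unfolding P_def by (metis Diff_empty empty_subsetI)
  have odd: "odd (length is)"
  proof -
    have "filter (\<lambda>i. i \<in> {..<n}) is = is" by (rule filter_True) (auto simp: is_def)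
    then show ?thesis using par[of "{..<n}"] Pn cardeq[of "{..<n}"] by simp
  qed
  have "f = (n, \<lambda>xs. if length xs = n then foldr (\<noteq>) (map (\<lambda>i. xs ! i) is) False else undefined)"
  proof (rule bop_eqI)
    show "is_op UNIV f" using fD by (simp add: D1_def)
    show "is_op UNIV (n, \<lambda>xs. if length xs = n then foldr (\<noteq>) (map (\<lambda>i. xs ! i) is) False else undefined)"
      by (auto simp: is_op_def tuples_UNIV)
    show "fst f = fst (n, \<lambda>xs. if length xs = n then foldr (\<noteq>) (map (\<lambda>i. xs ! i) is) False else undefined)"
      by (simp add: n_def)
    fix xs :: "bool list" assume l: "length xs = fst f"
    define S where "S = {j. j < n \<and> xs ! j}"
    have Sn: "S \<subseteq> {..<n}" by (auto simp: S_def)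
    have ln: "length xs = n" using l n_def by simp
    have "snd f xs = P S" unfolding P_def S_def by (rule arg_cong[OF list_ind[OF ln]])
    also have "\<dots> = odd (length (filter (\<lambda>i. i \<in> S) is))" using par[OF Sn] cardeq[OF Sn] by simp
    also have "filter (\<lambda>i. i \<in> S) is = filter (\<lambda>i. xs ! i) is"
      by (rule filter_cong) (auto simp: S_def is_def)
    also have "odd (length (filter (\<lambda>i. xs ! i) is)) = foldr (\<noteq>) (map (\<lambda>i. xs ! i) is) False"
      by (subst foldr_xor) (simp add: filter_map comp_def)
    finally show "snd f xs = snd (n, \<lambda>xs. if length xs = n then foldr (\<noteq>) (map (\<lambda>i. xs ! i) is) False else undefined) xs"
      using l by (simp add: n_def)
  qed
  moreover have "set is \<subseteq> {..<n}" by (auto simp: is_def)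
  ultimately show ?thesis using odd unfolding L4_def by blast
qed



lemma finite_blists: "finite {xs :: bool list. length xs = n}"
  using finite_lists_length_eq[OF finite_UNIV, of n] by simp

lemma interp:
  assumes C: "clone UNIV C" and mC: "maj3 \<in> C" and fo: "is_op UNIV f" and n: "fst f = n"
    and pair: "\<And>u v. length u = n \<Longrightarrow> length v = n \<Longrightarrow>
        \<exists>g\<in>C. fst g = n \<and> snd g u = snd f u \<and> snd g v = snd f v"
  shows "f \<in> C"
proof -
  have key: "\<forall>S. card S = k \<longrightarrow> S \<noteq> {} \<longrightarrow> S \<subseteq> {xs. length xs = n} \<longrightarrow>
      (\<exists>g\<in>C. fst g = n \<and> (\<forall>s\<in>S. snd g s = snd f s))" for k
  proof (induction k rule: less_induct)
    case (less k)
    show ?case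
    proof (intro allI impI)
      fix S :: "bool list set" assume cS: "card S = k" and ne: "S \<noteq> {}" and Sn: "S \<subseteq> {xs. length xs = n}"
      have finS: "finite S" using Sn finite_blists finite_subset by blast
      show "\<exists>g\<in>C. fst g = n \<and> (\<forall>s\<in>S. snd g s = snd f s)"
      proof (cases "k \<le> 2")
        case True
        obtain u where u: "u \<in> S" using ne by blast
        obtain v where v: "v \<in> S" "\<forall>s\<in>S. s = u \<or> s = v"
        proof (cases "S - {u} = {}")
          case True then show ?thesis using that[of u] u by blast
        next
          case False
          then obtain v where v: "v \<in> S - {u}" by blast
          have "card (S - {u}) \<le> Suc 0" using cS True u finS by (simp add: card_Diff_singleton)
          then have "\<forall>a1\<in>S - {u}. \<forall>a2\<in>S - {u}. a1 = a2"
            using card_le_Suc0_iff_eq[of "S - {u}"] finS by blast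
          then show ?thesis using that[of v] v by blast
        qed
        have lu: "length u = n" and lv: "length v = n" using u v Sn by auto
        obtain g where "g \<in> C" "fst g = n" "snd g u = snd f u" "snd g v = snd f v"
          using pair[OF lu lv] by blast
        then show ?thesis using v(2) by metis
      next
        case False
        obtain s1 where s1: "s1 \<in> S" using ne by blast
        have c1: "card (S - {s1}) = k - 1" using cS s1 finS by (simp add: card_Diff_singleton)
        then obtain s2 where s2: "s2 \<in> S - {s1}" using False
          by (metis card.empty diff_is_0_eq equals0I nat_le_linear numeral_le_one_iff semiring_norm(69) le_trans)
        have c2: "card (S - {s1} - {s2}) = k - 2" using c1 s2 finS by (simp add: card_Diff_singleton)
        have "0 < card (S - {s1} - {s2})" using c2 False by simp
        then have "S - {s1} - {s2} \<noteq> {}" by (simp add: card_gt_0_iff)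
        then obtain s3 where s3: "s3 \<in> S - {s1} - {s2}" by blast
        have d: "s1 \<noteq> s2" "s1 \<noteq> s3" "s2 \<noteq> s3" using s2 s3 by auto
        have IHs: "\<exists>g\<in>C. fst g = n \<and> (\<forall>s\<in>S - {t}. snd g s = snd f s)" if t: "t \<in> S" for t
        proof -
          have ct: "card (S - {t}) < k" using card_Diff1_less[OF finS t] cS by simp
          have "S - {t} \<noteq> {}" using d s1 s2 s3 t by blast
          moreover have "S - {t} \<subseteq> {xs. length xs = n}" using Sn by blast
          ultimately show ?thesis using less.IH[OF ct, rule_format, OF refl] by blast
        qed
        obtain g1 where g1: "g1 \<in> C" "fst g1 = n" "\<forall>s\<in>S - {s1}. snd g1 s = snd f s"
          using IHs[of s1] s1 by blast
        obtain g2 where g2: "g2 \<in> C" "fst g2 = n" "\<forall>s\<in>S - {s2}. snd g2 s = snd f s"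
          using IHs[of s2] s2 by blast
        obtain g3 where g3: "g3 \<in> C" "fst g3 = n" "\<forall>s\<in>S - {s3}. snd g3 s = snd f s"
          using IHs[of s3] s3 by blast
        define h where "h = compose UNIV n maj3 [g1, g2, g3]"
        have hC: "h \<in> C" unfolding h_def
          by (rule clone_comp[OF C mC]) (use g1 g2 g3 in auto)
        have "\<forall>s\<in>S. snd h s = snd f s"
        proof
          fix s assume sS: "s \<in> S"
          have st: "s \<in> tuples UNIV n" using sS Sn by (auto simp: tuples_UNIV)
          have hs: "snd h s = snd maj3 [snd g1 s, snd g2 s, snd g3 s]"
            unfolding h_def by (simp add: snd_compose[OF st])
          show "snd h s = snd f s" unfolding hs maj3_ev
            using g1(3) g2(3) g3(3) sS d by (cases "s = s1"; cases "s = s2"; auto)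
        qed
        moreover have "fst h = n" by (simp add: h_def)
        ultimately show ?thesis using hC by blast
      qed
    qed
  qed
  have "replicate n False \<in> {xs. length xs = n}" by simp
  then obtain g where g: "g \<in> C" "fst g = n" "\<forall>s\<in>{xs. length xs = n}. snd g s = snd f s"
    using key[rule_format, OF refl _ subset_refl] finite_blists by blast
  have "g = f"
  proof (rule bop_eqI)
    show "is_op UNIV g" using clone_is_op[OF C g(1)] .
    show "is_op UNIV f" by (rule fo)
    show "fst g = fst f" using g n by simp
    fix xs :: "bool list" assume "length xs = fst g"
    then show "snd g xs = snd f xs" using g by auto
  qed
  with g show ?thesis by simp
qed

lemma pair_D2:
  assumes C: "clone UNIV C" and f: "f \<in> D2" "fst f = n" and u: "length u = n" and v: "length v = n"
  shows "\<exists>g\<in>C. fst g = n \<and> snd g u = snd f u \<and> snd g v = snd f v"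
proof -
  have SD: "snd f (map Not x) = (\<not> snd f x)" if "length x = n" for x
    using f that by (auto simp: D2_def self_dual_def tuples_UNIV)
  have M: "snd f x \<longrightarrow> snd f y" if "length x = n" "length y = n" "\<forall>i<n. x!i \<longrightarrow> y!i" for x y
    using f that by (auto simp: D2_def monotone_bool_def tuples_UNIV le_bool_def)
  have "\<exists>i<n. u!i = snd f u \<and> v!i = snd f v"
  proof (rule ccontr)
    assume no: "\<not> (\<exists>i<n. u!i = snd f u \<and> v!i = snd f v)"
    have lnu: "length (map Not u) = n" using u by simp
    show False
    proof (cases "snd f u"; cases "snd f v")
      assume a: "snd f u" and b: "snd f v"
      have "\<forall>i<n. v!i \<longrightarrow> (map Not u)!i" using no a b u by auto
      then show False using M[OF v lnu] SD[OF u] a b by simp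
    next
      assume a: "snd f u" and b: "\<not> snd f v"
      have "\<forall>i<n. u!i \<longrightarrow> v!i" using no a b by auto
      then show False using M[OF u v] a b by simp
    next
      assume a: "\<not> snd f u" and b: "snd f v"
      have "\<forall>i<n. v!i \<longrightarrow> u!i" using no a b by auto
      then show False using M[OF v u] a b by simp
    next
      assume a: "\<not> snd f u" and b: "\<not> snd f v"
      have "\<forall>i<n. (map Not u)!i \<longrightarrow> v!i" using no a b u by auto
      then show False using M[OF lnu v] SD[OF u] a b by simp
    qed
  qed
  then obtain i where i: "i < n" "u!i = snd f u" "v!i = snd f v" by blast
  have pC: "proj UNIV n i \<in> C" using clone_proj[OF C i(1)] .
  have "snd (proj UNIV n i) u = u!i" "snd (proj UNIV n i) v = v!i"
    using u v by (simp_all add: snd_proj tuples_UNIV)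
  then show ?thesis using i by (intro bexI[OF _ pC]) simp
qed

lemma pair_D1:
  assumes C: "clone UNIV C" and xC: "xor3 \<in> C" and f: "f \<in> D1" "fst f = n"
    and u: "length u = n" and v: "length v = n"
  shows "\<exists>g\<in>C. fst g = n \<and> snd g u = snd f u \<and> snd g v = snd f v"
proof -
  define a where "a = snd f u"
  define b where "b = snd f v"
  have SD: "snd f (map Not x) = (\<not> snd f x)" if "length x = n" for x
    using f that by (auto simp: D1_def self_dual_def tuples_UNIV)
  have z: "snd f (replicate n False) = False" using f by (simp add: D1_def)
  have o: "snd f (replicate n True) = True" using SD[of "replicate n False"] z by (simp add: map_replicate_const)
  have rep: "snd f x = c" if "length x = n" "\<forall>i<n. x!i = c" for x c
  proof -
    have "x = replicate n c" using that by (simp add: list_eq_iff_nth_eq)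
    then show ?thesis using z o by (cases c) auto
  qed
  have F3: "b = (\<not> a)" if "\<forall>i<n. v!i = (\<not> u!i)"
  proof -
    have "v = map Not u" using that u v by (simp add: list_eq_iff_nth_eq)
    then show ?thesis using SD[OF u] by (simp add: a_def b_def)
  qed
  have F4: "b = a" if "\<forall>i<n. v!i = u!i"
  proof -
    have "v = u" using that u v by (simp add: list_eq_iff_nth_eq)
    then show ?thesis by (simp add: a_def b_def)
  qed
  show ?thesis
  proof (cases "\<exists>i<n. u!i = a \<and> v!i = b")
    case True
    then obtain i where i: "i < n" "u!i = a" "v!i = b" by blast
    have pC: "proj UNIV n i \<in> C" using clone_proj[OF C i(1)] .
    have "snd (proj UNIV n i) u = u!i" "snd (proj UNIV n i) v = v!i"
      using u v by (simp_all add: snd_proj tuples_UNIV)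
    then show ?thesis using i by (intro bexI[OF _ pC]) (simp add: a_def b_def)
  next
    case no0: False
    have E1: "\<exists>i<n. u!i = (\<not>a) \<and> v!i = b"
    proof (rule ccontr)
      assume no1: "\<not> ?thesis"
      have "\<forall>i<n. v!i = (\<not> b)"
      proof (intro allI impI)
        fix i assume "i < n" then show "v!i = (\<not> b)" using no0 no1 by (cases "u!i = a") auto
      qed
      then have "snd f v = (\<not> b)" by (rule rep[OF v])
      then have "b = (\<not> b)" by (simp add: b_def)
      then show False by simp
    qed
    have E2: "\<exists>i<n. u!i = a \<and> v!i = (\<not>b)"
    proof (rule ccontr)
      assume no2: "\<not> ?thesis"
      have "\<forall>i<n. u!i = (\<not> a)"
      proof (intro allI impI)
        fix i assume "i < n" then show "u!i = (\<not> a)" using no0 no2 by (cases "v!i = b") auto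
      qed
      then have "snd f u = (\<not> a)" by (rule rep[OF u])
      then have "a = (\<not> a)" by (simp add: a_def)
      then show False by simp
    qed
    have E3: "\<exists>i<n. u!i = (\<not>a) \<and> v!i = (\<not>b)"
    proof (rule ccontr)
      assume no3: "\<not> ?thesis"
      show False
      proof (cases "b = a")
        case True
        have "\<forall>i<n. v!i = (\<not> u!i)"
        proof (intro allI impI)
          fix i assume "i < n" then show "v!i = (\<not> u!i)" using no0 no3 True by (cases "u!i = a") auto
        qed
        then show False using F3 True by simp
      next
        case False
        have "\<forall>i<n. v!i = u!i"
        proof (intro allI impI)
          fix i assume "i < n" then show "v!i = u!i" using no0 no3 False by (cases "u!i = a") auto
        qed
        then show False using F4 False by simp
      qed
    qed
    obtain i where i: "i < n" "u!i = (\<not>a)" "v!i = b" using E1 by blast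
    obtain j where j: "j < n" "u!j = a" "v!j = (\<not>b)" using E2 by blast
    obtain k where k: "k < n" "u!k = (\<not>a)" "v!k = (\<not>b)" using E3 by blast
    define g where "g = compose UNIV n xor3 [proj UNIV n i, proj UNIV n j, proj UNIV n k]"
    have gC: "g \<in> C" unfolding g_def
      by (rule clone_comp[OF C xC]) (use clone_proj[OF C i(1)] clone_proj[OF C j(1)] clone_proj[OF C k(1)] in auto)
    have gev: "snd g w = (w!i \<noteq> (w!j \<noteq> w!k))" if "length w = n" for w
    proof -
      have wt: "w \<in> tuples UNIV n" using that by (simp add: tuples_UNIV)
      show ?thesis unfolding g_def by (simp add: snd_compose[OF wt] snd_proj[OF wt] xor3_ev)
    qed
    show ?thesis
    proof (intro bexI[OF _ gC] conjI)
      show "fst g = n" by (simp add: g_def)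
      show "snd g u = snd f u" using gev[OF u] i j k by (simp add: a_def)
      show "snd g v = snd f v" using gev[OF v] i j k by (simp add: b_def)
    qed
  qed
qed

definition lin :: "nat \<Rightarrow> nat list \<Rightarrow> bool oper" where
  "lin n is = (n, \<lambda>xs. if length xs = n then foldr (\<noteq>) (map (\<lambda>i. xs ! i) is) False else undefined)"

lemma is_op_lin: "is_op UNIV (lin n is)" by (auto simp: is_op_def lin_def tuples_UNIV)

lemma lin_C:
  assumes C: "clone UNIV C" and xC: "xor3 \<in> C"
  shows "odd (length is) \<Longrightarrow> set is \<subseteq> {..<n} \<Longrightarrow> lin n is \<in> C"
proof (induction "is" rule: induct_list012)
  case 1 then show ?case by simp
next
  case (2 i)
  have "lin n [i] = proj UNIV n i"
    by (rule bop_eqI[OF is_op_lin is_op_projU]) (auto simp: lin_def snd_proj tuples_UNIV)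
  then show ?case using clone_proj[OF C] 2 by simp
next
  case (3 i j zs)
  have zC: "lin n zs \<in> C" using 3 by simp
  define h where "h = compose UNIV n xor3 [proj UNIV n i, proj UNIV n j, lin n zs]"
  have hC: "h \<in> C" unfolding h_def
    by (rule clone_comp[OF C xC]) (use clone_proj[OF C] zC 3(4) in \<open>auto simp: lin_def\<close>)
  have "h = lin n (i # j # zs)"
  proof (rule bop_eqI[OF clone_is_op[OF C hC] is_op_lin])
    show "fst h = fst (lin n (i # j # zs))" by (simp add: h_def lin_def)
    fix xs :: "bool list" assume "length xs = fst h"
    then have wt: "xs \<in> tuples UNIV n" by (simp add: tuples_UNIV h_def)
    then show "snd h xs = snd (lin n (i # j # zs)) xs"
      unfolding h_def by (simp add: snd_compose[OF wt] snd_proj[OF wt] xor3_ev lin_def tuples_UNIV)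
  qed
  with hC show ?case by simp
qed

lemma classify:
  assumes C: "clone UNIV C" "C \<subseteq> D1"
  shows "C \<in> {O1, D1, D2, L4} \<and> (C \<noteq> O1 \<longrightarrow> maj3 \<in> C \<or> xor3 \<in> C)"
proof (cases "maj3 \<in> C"; cases "xor3 \<in> C")
  assume m: "maj3 \<in> C" and x: "xor3 \<in> C"
  have "D1 \<subseteq> C"
  proof
    fix f assume f: "f \<in> D1"
    show "f \<in> C"
      by (rule interp[OF C(1) m D1_is_op[OF f] refl]) (rule pair_D1[OF C(1) x f refl])
  qed
  with C m show ?thesis by auto
next
  assume m: "maj3 \<in> C" and x: "xor3 \<notin> C"
  have "D2 \<subseteq> C"
  proof
    fix f assume f: "f \<in> D2"
    have fo: "is_op UNIV f" using f by (simp add: D2_def)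
    show "f \<in> C"
      by (rule interp[OF C(1) m fo refl]) (rule pair_D2[OF C(1) f refl])
  qed
  moreover have "C \<subseteq> D2" using C_sub_D2[OF C x] by blast
  ultimately show ?thesis using m by auto
next
  assume m: "maj3 \<notin> C" and x: "xor3 \<in> C"
  have "L4 \<subseteq> C"
  proof
    fix f assume "f \<in> L4"
    then obtain n "is" where "f = lin n is" "odd (length is)" "set is \<subseteq> {..<n}"
      unfolding L4_def lin_def by blast
    then show "f \<in> C" using lin_C[OF C(1) x] by simp
  qed
  moreover have "C \<subseteq> L4" using C_sub_L4[OF C m] by blast
  ultimately show ?thesis using x by auto
next
  assume m: "maj3 \<notin> C" and x: "xor3 \<notin> C"
  have "O1 \<subseteq> C" using clone_proj[OF C(1)] by (auto simp: O1_def)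
  moreover have "C \<subseteq> O1" using C_sub_O1[OF C m x] by blast
  ultimately show ?thesis by auto
qed



lemma rank_proj:
  assumes "clone_rank A F = r" "f \<in> F" "enat (fst f) < r"
  shows "is_projection A f"
proof (rule ccontr)
  assume np: "\<not> is_projection A f"
  then have "clone_rank A F = enat (LEAST r. \<exists>f\<in>F. fst f = r \<and> \<not> is_projection A f)"
    using assms(2) by (auto simp: clone_rank_def)
  moreover have "(LEAST r. \<exists>f\<in>F. fst f = r \<and> \<not> is_projection A f) \<le> fst f"
    by (rule Least_le) (use assms(2) np in blast)
  ultimately have "r \<le> enat (fst f)" using assms(1) by simp
  with assms(3) show False by simp
qed

definition patt :: "'a \<Rightarrow> 'a \<Rightarrow> 'a oper \<Rightarrow> bool list \<Rightarrow> bool" where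
  "patt b0 b1 f x = (snd f (map (\<lambda>b. if b then b1 else b0) x) = b1)"

definition tau :: "'a \<Rightarrow> 'a \<Rightarrow> 'a oper \<Rightarrow> bool oper" where
  "tau b0 b1 f = (fst f, \<lambda>xs. if length xs = fst f then patt b0 b1 f xs else undefined)"

lemma fst_tau[simp]: "fst (tau b0 b1 f) = fst f" by (simp add: tau_def)
lemma snd_tau: "length xs = fst f \<Longrightarrow> snd (tau b0 b1 f) xs = patt b0 b1 f xs" by (simp add: tau_def)

locale L =
  fixes A :: "'a set" and F :: "'a oper set" and b0 b1 :: 'a
  assumes cl: "clone A F" and cons: "conservative A F"
    and bp: "\<And>g. g \<in> F \<Longrightarrow> fst g = 2 \<Longrightarrow> is_projection A g"
    and b0: "b0 \<in> A" and b1: "b1 \<in> A" and b01: "b0 \<noteq> b1"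
begin

lemma bin_minor:
  assumes f: "f \<in> F" and x: "length x = fst f"
  shows "\<exists>j<2. \<forall>p q. p \<in> A \<longrightarrow> q \<in> A \<longrightarrow> snd f (map (\<lambda>b. if b then q else p) x) = [p,q] ! j"
proof -
  define gs where "gs = map (\<lambda>b. proj A 2 (if b then 1 else 0)) x"
  define g where "g = compose A 2 f gs"
  have gF: "g \<in> F" unfolding g_def
  proof (rule clone_comp[OF cl f])
    show "length gs = fst f" using x by (simp add: gs_def)
    show "set gs \<subseteq> F" using clone_proj[OF cl] by (auto simp: gs_def)
    show "\<forall>g\<in>set gs. fst g = 2" by (auto simp: gs_def)
  qed
  have "is_projection A g" using bp[OF gF] by (simp add: g_def)
  then obtain j where j: "j < 2" "g = proj A 2 j" by (auto simp: is_projection_def g_def)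
  have "\<forall>p q. p \<in> A \<longrightarrow> q \<in> A \<longrightarrow> snd f (map (\<lambda>b. if b then q else p) x) = [p,q] ! j"
  proof (intro allI impI)
    fix p q assume p: "p \<in> A" and q: "q \<in> A"
    have t: "[p,q] \<in> tuples A 2" using p q by (simp add: tuples_def)
    have meq: "map (\<lambda>b. [p,q] ! (if b then 1 else 0)) x = map (\<lambda>b. if b then q else p) x"
      by (rule map_cong) auto
    have "snd g [p,q] = snd f (map (\<lambda>b. [p,q] ! (if b then 1 else 0)) x)"
      unfolding g_def gs_def by (simp add: snd_compose[OF t] snd_proj[OF t] comp_def)
    then have "snd g [p,q] = snd f (map (\<lambda>b. if b then q else p) x)" unfolding meq .
    moreover have "snd g [p,q] = [p,q] ! j" using j(2) snd_proj[OF t] by simp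
    ultimately show "snd f (map (\<lambda>b. if b then q else p) x) = [p,q] ! j" by simp
  qed
  with j show ?thesis by blast
qed

lemma pat_ev:
  assumes f: "f \<in> F" and x: "length x = fst f"
    and r: "\<rho> False \<in> A" "\<rho> True \<in> A" "\<rho> False \<noteq> \<rho> True"
  shows "snd f (map \<rho> x) = \<rho> (patt b0 b1 f x)"
proof -
  obtain j where j: "j < 2" and J: "\<And>p q. p \<in> A \<Longrightarrow> q \<in> A \<Longrightarrow> snd f (map (\<lambda>b. if b then q else p) x) = [p,q] ! j"
    using bin_minor[OF f x] by blast
  have m1: "map \<rho> x = map (\<lambda>b. if b then \<rho> True else \<rho> False) x"
  proof (rule map_cong[OF refl])
    fix b :: bool show "\<rho> b = (if b then \<rho> True else \<rho> False)" by (cases b) auto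
  qed
  have e1: "snd f (map \<rho> x) = [\<rho> False, \<rho> True] ! j" by (subst m1) (rule J[OF r(1,2)])
  have e2: "patt b0 b1 f x = ([b0,b1] ! j = b1)" using J[OF b0 b1] by (simp add: patt_def)
  show ?thesis using j e1 e2 b01 r(3) by (cases j) (auto simp: less_2_cases_iff)
qed

lemma pat_ev0:
  assumes f: "f \<in> F" and x: "length x = fst f"
  shows "snd f (map (\<lambda>b. if b then b1 else b0) x) = (if patt b0 b1 f x then b1 else b0)"
  using pat_ev[OF f x, of "\<lambda>b. if b then b1 else b0"] b0 b1 b01 by simp

lemma arity_pos: assumes "f \<in> F" shows "fst f > 0"
proof (rule ccontr)
  assume "\<not> fst f > 0"
  then have "[] \<in> tuples A (fst f)" by (simp add: tuples_def)
  with cons assms have "snd f [] \<in> set []" unfolding conservative_def by blast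
  then show False by simp
qed

lemma tau_D1: assumes f: "f \<in> F" shows "tau b0 b1 f \<in> D1"
proof -
  have io: "is_op UNIV (tau b0 b1 f)" by (auto simp: is_op_def tau_def tuples_UNIV)
  have sd: "self_dual (tau b0 b1 f)"
    unfolding self_dual_def
  proof
    fix xs :: "bool list" assume "xs \<in> tuples UNIV (fst (tau b0 b1 f))"
    then have l: "length xs = fst f" by (simp add: tuples_UNIV)
    define \<rho>' where "\<rho>' = (\<lambda>b::bool. if b then b0 else b1)"
    have me: "map (\<lambda>b. if b then b1 else b0) (map Not xs) = map \<rho>' xs"
      by (simp add: \<rho>'_def)
    have pe: "snd f (map \<rho>' xs) = \<rho>' (patt b0 b1 f xs)"
      by (rule pat_ev[OF f l]) (use b0 b1 b01 in \<open>auto simp: \<rho>'_def\<close>)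
    have "patt b0 b1 f (map Not xs) = (snd f (map \<rho>' xs) = b1)" unfolding patt_def me ..
    also have "\<dots> = (\<not> patt b0 b1 f xs)" using pe b01 by (cases "patt b0 b1 f xs") (auto simp: \<rho>'_def)
    finally have "patt b0 b1 f (map Not xs) = (\<not> patt b0 b1 f xs)" .
    then show "snd (tau b0 b1 f) (map Not xs) = (\<not> snd (tau b0 b1 f) xs)"
      using l b01 by (simp add: snd_tau)
  qed
  have z: "\<not> patt b0 b1 f (replicate (fst f) False)"
  proof
    assume "patt b0 b1 f (replicate (fst f) False)"
    then have e: "snd f (replicate (fst f) b0) = b1" by (simp add: patt_def map_replicate_const)
    have "replicate (fst f) b0 \<in> tuples A (fst f)" using b0 by (auto simp: tuples_def)
    with cons f have "snd f (replicate (fst f) b0) \<in> set (replicate (fst f) b0)"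
      unfolding conservative_def by blast
    with e b01 show False by (auto dest: in_set_replicate[THEN iffD1])
  qed
  show ?thesis using io sd z by (simp add: D1_def snd_tau)
qed

lemma tau_proj: assumes "i < n" shows "tau b0 b1 (proj A n i) = proj UNIV n i"
proof (rule bop_eqI)
  show "is_op UNIV (tau b0 b1 (proj A n i))" by (auto simp: is_op_def tau_def tuples_UNIV)
  show "is_op UNIV (proj UNIV n i)" by (rule is_op_projU)
  show "fst (tau b0 b1 (proj A n i)) = fst (proj UNIV n i)" by simp
  fix xs :: "bool list" assume l: "length xs = fst (tau b0 b1 (proj A n i))"
  then have l': "length xs = n" by simp
  have t: "map (\<lambda>b. if b then b1 else b0) xs \<in> tuples A n" using l' b0 b1 by (auto simp: tuples_def)
  have "snd (tau b0 b1 (proj A n i)) xs = (snd (proj A n i) (map (\<lambda>b. if b then b1 else b0) xs) = b1)"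
    using l' by (simp add: snd_tau patt_def)
  also have "\<dots> = xs ! i" using snd_proj[OF t] l' assms b01 by simp
  also have "\<dots> = snd (proj UNIV n i) xs" using l' by (simp add: snd_proj tuples_UNIV)
  finally show "snd (tau b0 b1 (proj A n i)) xs = snd (proj UNIV n i) xs" .
qed

lemma is_op_composeU: "is_op UNIV (compose UNIV m f gs)"
  by (auto simp: is_op_def compose_def)

lemma tau_comp:
  assumes f: "f \<in> F" and gs: "set gs \<subseteq> F" "length gs = fst f" "\<forall>g\<in>set gs. fst g = m"
  shows "tau b0 b1 (compose A m f gs) = compose UNIV m (tau b0 b1 f) (map (tau b0 b1) gs)"
proof (rule bop_eqI)
  show "is_op UNIV (tau b0 b1 (compose A m f gs))" by (auto simp: is_op_def tau_def tuples_UNIV)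
  show "is_op UNIV (compose UNIV m (tau b0 b1 f) (map (tau b0 b1) gs))" by (rule is_op_composeU)
  show "fst (tau b0 b1 (compose A m f gs)) = fst (compose UNIV m (tau b0 b1 f) (map (tau b0 b1) gs))" by simp
  fix xs :: "bool list" assume "length xs = fst (tau b0 b1 (compose A m f gs))"
  then have l: "length xs = m" by simp
  define \<rho> where "\<rho> = (\<lambda>b::bool. if b then b1 else b0)"
  have t: "map \<rho> xs \<in> tuples A m" using l b0 b1 by (auto simp: tuples_def \<rho>_def)
  have tU: "xs \<in> tuples UNIV m" using l by (simp add: tuples_UNIV)
  have eg: "map (\<lambda>g. snd g (map \<rho> xs)) gs = map \<rho> (map (\<lambda>g. patt b0 b1 g xs) gs)"
  proof -
    have "snd g (map \<rho> xs) = \<rho> (patt b0 b1 g xs)" if "g \<in> set gs" for g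
      using pat_ev0[of g xs] that gs l by (auto simp: \<rho>_def)
    then show ?thesis by simp
  qed
  have lg: "length (map (\<lambda>g. patt b0 b1 g xs) gs) = fst f" using gs by simp
  have "snd (tau b0 b1 (compose A m f gs)) xs = (snd (compose A m f gs) (map \<rho> xs) = b1)"
    using l by (simp add: snd_tau patt_def \<rho>_def)
  also have "\<dots> = (snd f (map \<rho> (map (\<lambda>g. patt b0 b1 g xs) gs)) = b1)"
    by (simp only: snd_compose[OF t] eg)
  also have "\<dots> = patt b0 b1 f (map (\<lambda>g. patt b0 b1 g xs) gs)" by (simp add: patt_def \<rho>_def)
  also have "\<dots> = snd (compose UNIV m (tau b0 b1 f) (map (tau b0 b1) gs)) xs"
  proof -
    have mm: "map (\<lambda>g'. snd g' xs) (map (tau b0 b1) gs) = map (\<lambda>g. patt b0 b1 g xs) gs"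
      using gs l by (auto simp: snd_tau)
    show ?thesis by (simp only: snd_compose[OF tU] mm snd_tau[OF lg])
  qed
  finally show "snd (tau b0 b1 (compose A m f gs)) xs = snd (compose UNIV m (tau b0 b1 f) (map (tau b0 b1) gs)) xs" .
qed

lemma image_clone: "clone UNIV (tau b0 b1 ` F)"
  unfolding clone_def
proof (intro conjI allI impI ballI)
  fix f' assume "f' \<in> tau b0 b1 ` F"
  then show "is_op UNIV f'" using tau_D1 D1_is_op by blast
next
  fix n i :: nat assume "i < n"
  then show "proj UNIV n i \<in> tau b0 b1 ` F"
    using tau_proj clone_proj[OF cl] by (metis image_eqI)
next
  fix f' m gs' assume f': "f' \<in> tau b0 b1 ` F"
    and h: "length gs' = fst f' \<and> set gs' \<subseteq> tau b0 b1 ` F \<and> (\<forall>g\<in>set gs'. fst g = m)"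
  obtain f where f: "f \<in> F" "f' = tau b0 b1 f" using f' by blast
  define gs where "gs = map (\<lambda>g'. SOME g. g \<in> F \<and> tau b0 b1 g = g') gs'"
  have pre: "(SOME g. g \<in> F \<and> tau b0 b1 g = g') \<in> F \<and> tau b0 b1 (SOME g. g \<in> F \<and> tau b0 b1 g = g') = g'"
    if "g' \<in> set gs'" for g'
  proof (rule someI_ex)
    show "\<exists>g. g \<in> F \<and> tau b0 b1 g = g'" using that h by blast
  qed
  have m: "map (tau b0 b1) gs = gs'" unfolding gs_def by (rule nth_equalityI) (use pre in auto)
  have sF: "set gs \<subseteq> F" unfolding gs_def using pre by auto
  have lg: "length gs = fst f" using h f by (simp add: gs_def)
  have ar: "\<forall>g\<in>set gs. fst g = m"
  proof
    fix g assume "g \<in> set gs"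
    then have "tau b0 b1 g \<in> set gs'" using m by force
    then have "fst (tau b0 b1 g) = m" using h by blast
    then show "fst g = m" by simp
  qed
  have "compose UNIV m f' gs' = tau b0 b1 (compose A m f gs)"
    using tau_comp[OF f(1) sF lg ar] f(2) m by simp
  moreover have "compose A m f gs \<in> F" by (rule clone_comp[OF cl f(1) lg sF ar])
  ultimately show "compose UNIV m f' gs' \<in> tau b0 b1 ` F" by blast
qed

end



lemma maj3_not_proj: assumes i: "i < 3" shows "maj3 \<noteq> proj UNIV 3 i"
proof
  assume e: "maj3 = proj UNIV 3 i"
  have h: "snd maj3 [x,y,z] = [x,y,z] ! i" for x y z :: bool
  proof -
    have "snd (proj UNIV 3 i) [x,y,z] = [x,y,z] ! i" by (rule snd_proj[OF t3])
    then show ?thesis using e by simp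
  qed
  have "i = 0 \<or> i = 1 \<or> i = 2" using i by auto
  then show False
    using h[of True False False] h[of False True False] h[of False False True] by (auto simp: maj3_ev)
qed

lemma xor3_not_proj: assumes i: "i < 3" shows "xor3 \<noteq> proj UNIV 3 i"
proof
  assume e: "xor3 = proj UNIV 3 i"
  have h: "snd xor3 [x,y,z] = [x,y,z] ! i" for x y z :: bool
  proof -
    have "snd (proj UNIV 3 i) [x,y,z] = [x,y,z] ! i" by (rule snd_proj[OF t3])
    then show ?thesis using e by simp
  qed
  have "i = 0 \<or> i = 1 \<or> i = 2" using i by auto
  then show False
    using h[of True True False] h[of False True True] by (auto simp: xor3_ev)
qed

context L begin

lemma sigma_id:
  assumes B: "B \<subseteq> A" and s: "bij_betw \<sigma> B (UNIV::bool set)" and f: "f \<in> F" "fst f = n"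
    and a: "a \<in> tuples B n"
  shows "snd f a = the_inv_into B \<sigma> (snd (tau b0 b1 f) (map \<sigma> a))"
proof -
  define \<rho> where "\<rho> = the_inv_into B \<sigma>"
  have inj: "inj_on \<sigma> B" and im: "\<sigma> ` B = UNIV" using s by (auto simp: bij_betw_def)
  have rB: "\<rho> x \<in> B" for x unfolding \<rho>_def by (rule the_inv_into_into[OF inj]) (use im in auto)
  have sr: "\<sigma> (\<rho> x) = x" for x unfolding \<rho>_def by (rule f_the_inv_into_f[OF inj]) (use im in auto)
  have r: "\<rho> False \<in> A" "\<rho> True \<in> A" "\<rho> False \<noteq> \<rho> True"
    using rB B sr[of False] sr[of True] by auto
  have la: "length a = n" and sa: "set a \<subseteq> B" using a by (auto simp: tuples_def)
  have ma: "map \<rho> (map \<sigma> a) = a"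
    using sa by (induction a) (auto simp: \<rho>_def the_inv_into_f_f[OF inj])
  have lm: "length (map \<sigma> a) = fst f" using la f(2) by simp
  have "snd f a = snd f (map \<rho> (map \<sigma> a))" using ma by simp
  also have "\<dots> = \<rho> (patt b0 b1 f (map \<sigma> a))" by (rule pat_ev[OF f(1) lm r])
  also have "\<dots> = the_inv_into B \<sigma> (snd (tau b0 b1 f) (map \<sigma> a))"
    by (simp add: \<rho>_def snd_tau[OF lm])
  finally show ?thesis .
qed

lemma small:
  assumes rk: "clone_rank A F = r" and f: "f \<in> F"
    and tp: "tau b0 b1 f = proj UNIV (fst f) i" "i < fst f"
    and a: "a \<in> tuples A (fst f)" and c: "enat (card (set a)) < r"
  shows "snd f a = a ! i"
proof -
  define n where "n = fst f"
  have la: "length a = n" and sa: "set a \<subseteq> A" using a by (auto simp: tuples_def n_def)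
  define vs where "vs = remdups a"
  define k where "k = length vs"
  have kc: "k = card (set a)" by (simp add: k_def vs_def length_remdups_card_conv)
  have svs: "set vs = set a" by (simp add: vs_def)
  define idx where "idx y = (SOME j. j < k \<and> vs ! j = y)" for y
  have idx: "idx y < k \<and> vs ! idx y = y" if "y \<in> set a" for y
  proof -
    have "y \<in> set vs" using that svs by simp
    then have "\<exists>j. j < k \<and> vs ! j = y" unfolding k_def by (metis in_set_conv_nth)
    then show ?thesis unfolding idx_def by (rule someI_ex)
  qed
  define gs where "gs = map (\<lambda>y. proj A k (idx y)) a"
  define h where "h = compose A k f gs"
  have hF: "h \<in> F" unfolding h_def
  proof (rule clone_comp[OF cl f])
    show "length gs = fst f" using la by (simp add: gs_def n_def)
    show "set gs \<subseteq> F" using clone_proj[OF cl] idx by (auto simp: gs_def)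
    show "\<forall>g\<in>set gs. fst g = k" by (auto simp: gs_def)
  qed
  have "enat (fst h) < r" using c kc by (simp add: h_def)
  then have "is_projection A h" by (rule rank_proj[OF rk hF])
  then obtain j where j: "j < k" "h = proj A k j" by (auto simp: is_projection_def h_def)
  have hev: "snd h w = snd f (map (\<lambda>y. w ! idx y) a)" if w: "w \<in> tuples A k" for w
  proof -
    have "map (\<lambda>g. snd g w) gs = map (\<lambda>y. w ! idx y) a"
      by (simp add: gs_def snd_proj[OF w])
    then show ?thesis unfolding h_def by (simp add: snd_compose[OF w])
  qed
  have hj: "snd h w = w ! j" if w: "w \<in> tuples A k" for w using j(2) snd_proj[OF w] by simp
  have vt: "vs \<in> tuples A k" using svs sa by (simp add: tuples_def k_def)
  have "map (\<lambda>y. vs ! idx y) a = a" by (rule map_idI) (use idx in blast)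
  then have e1: "snd f a = vs ! j" using hev[OF vt] hj[OF vt] by simp
  define ws where "ws = map (\<lambda>z. if z = a ! i then b1 else b0) vs"
  have wt: "ws \<in> tuples A k" using b0 b1 by (auto simp: tuples_def ws_def k_def)
  have "ws ! j = (if vs ! j = a ! i then b1 else b0)" using j(1) by (simp add: ws_def k_def)
  moreover have "snd h ws = b1"
  proof -
    have meq: "map (\<lambda>y. ws ! idx y) a = map (\<lambda>b. if b then b1 else b0) (map (\<lambda>y. y = a ! i) a)"
      using idx by (auto simp: ws_def k_def)
    have "snd h ws = snd f (map (\<lambda>b. if b then b1 else b0) (map (\<lambda>y. y = a ! i) a))"
      by (simp only: hev[OF wt] meq)
    also have "\<dots> = (if patt b0 b1 f (map (\<lambda>y. y = a ! i) a) then b1 else b0)"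
      by (rule pat_ev0[OF f]) (simp add: la n_def)
    also have "patt b0 b1 f (map (\<lambda>y. y = a ! i) a) = snd (tau b0 b1 f) (map (\<lambda>y. y = a ! i) a)"
      using la by (simp add: snd_tau n_def)
    also have "\<dots> = True" using tp la by (simp add: snd_proj tuples_UNIV n_def)
    finally show ?thesis by simp
  qed
  ultimately have "vs ! j = a ! i" using hj[OF wt] b01 by (auto split: if_splits)
  with e1 show ?thesis by simp
qed

end

theorem lemma7:
  fixes A :: "'a set" and F :: "'a oper set" and r :: enat
  assumes "\<exists>a b. a \<in> A \<and> b \<in> A \<and> a \<noteq> b"
    and "clone A F" and "conservative A F"
    and "clone_rank A F = r" and "r \<ge> 3"
  shows "\<exists>P (\<tau> :: 'a oper \<Rightarrow> bool oper). P \<in> {O1, D1, D2, L4} \<and> \<tau> ` F = P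
     \<and> (\<forall>f\<in>F. fst (\<tau> f) = fst f)
     \<and> (\<forall>B \<sigma> n f a. B \<subseteq> A \<and> card B = 2 \<and> bij_betw \<sigma> B (UNIV :: bool set)
            \<and> f \<in> F \<and> fst f = n \<and> a \<in> tuples B n
            \<longrightarrow> snd f a = the_inv_into B \<sigma> (snd (\<tau> f) (map \<sigma> a)))
     \<and> (r \<ge> 4 \<longrightarrow> P = O1 \<and> (\<forall>f\<in>F. \<exists>i<fst f. \<forall>a\<in>tuples A (fst f).
            enat (card (set a)) < r \<longrightarrow> snd f a = a ! i))"
proof -
  obtain b0 b1 where b: "b0 \<in> A" "b1 \<in> A" "b0 \<noteq> b1" using assms(1) by blast
  have bp: "is_projection A g" if "g \<in> F" "fst g = 2" for g
  proof (rule rank_proj[OF assms(4) that(1)])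
    have "enat 2 < 3" by (simp add: numeral_eq_enat)
    then show "enat (fst g) < r" using that(2) assms(5) by (metis order_less_le_trans)
  qed
  interpret L A F b0 b1 using assms(2,3) bp b by unfold_locales auto
  define T where "T = tau b0 b1"
  have cU: "clone UNIV (T ` F)" unfolding T_def by (rule image_clone)
  have sub: "T ` F \<subseteq> D1" unfolding T_def using tau_D1 by blast
  note cls = classify[OF cU sub]
  have part4: "r \<ge> 4 \<longrightarrow> T ` F = O1 \<and> (\<forall>f\<in>F. \<exists>i<fst f. \<forall>a\<in>tuples A (fst f).
            enat (card (set a)) < r \<longrightarrow> snd f a = a ! i)"
  proof
    assume r4: "r \<ge> 4"
    have p3: "is_projection A f" if "f \<in> F" "fst f = 3" for f
    proof (rule rank_proj[OF assms(4) that(1)])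
      have "enat 3 < 4" by (simp add: numeral_eq_enat)
      then show "enat (fst f) < r" using that(2) r4 by (metis order_less_le_trans)
    qed
    have tp3: "\<exists>i<3. T f = proj UNIV 3 i" if ff: "f \<in> F" "fst f = 3" for f
    proof -
      obtain i where "i < 3" "f = proj A 3 i" using p3[OF ff] ff(2) by (auto simp: is_projection_def)
      then show ?thesis using tau_proj by (auto simp: T_def)
    qed
    have O: "T ` F = O1"
    proof (rule ccontr)
      assume "T ` F \<noteq> O1"
      then have "maj3 \<in> T ` F \<or> xor3 \<in> T ` F" using cls by blast
      then obtain f where f: "f \<in> F" "T f = maj3 \<or> T f = xor3"
        by (elim disjE imageE) (metis, metis)
      have "fst (T f) = 3" using f(2) by auto
      then have "fst f = 3" by (simp add: T_def)
      with tp3[OF f(1)] obtain i where i3: "i < 3" and Ti: "T f = proj UNIV 3 i" by blast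
      show False using f(2) maj3_not_proj[OF i3] xor3_not_proj[OF i3] Ti by auto
    qed
    have "\<forall>f\<in>F. \<exists>i<fst f. \<forall>a\<in>tuples A (fst f). enat (card (set a)) < r \<longrightarrow> snd f a = a ! i"
    proof
      fix f assume f: "f \<in> F"
      have "T f \<in> O1" using O f by blast
      then obtain n i where ni: "T f = proj UNIV n i" "i < n" by (auto simp: O1_def)
      then have nf: "n = fst f" using fst_tau[of b0 b1 f] by (simp add: T_def)
      have tpf: "tau b0 b1 f = proj UNIV (fst f) i" using ni nf by (simp add: T_def)
      have il: "i < fst f" using ni nf by simp
      have "\<forall>a\<in>tuples A (fst f). enat (card (set a)) < r \<longrightarrow> snd f a = a ! i"
        by (intro ballI impI) (rule small[OF assms(4) f tpf il])
      with il show "\<exists>i<fst f. \<forall>a\<in>tuples A (fst f). enat (card (set a)) < r \<longrightarrow> snd f a = a ! i"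
        by blast
    qed
    with O show "T ` F = O1 \<and> (\<forall>f\<in>F. \<exists>i<fst f. \<forall>a\<in>tuples A (fst f).
            enat (card (set a)) < r \<longrightarrow> snd f a = a ! i)" by blast
  qed
  show ?thesis
  proof (intro exI conjI)
    show "T ` F \<in> {O1, D1, D2, L4}" using cls by blast
    show "T ` F = T ` F" ..
    show "\<forall>f\<in>F. fst (T f) = fst f" by (simp add: T_def)
    show "\<forall>B \<sigma> n f a. B \<subseteq> A \<and> card B = 2 \<and> bij_betw \<sigma> B (UNIV :: bool set)
            \<and> f \<in> F \<and> fst f = n \<and> a \<in> tuples B n
            \<longrightarrow> snd f a = the_inv_into B \<sigma> (snd (T f) (map \<sigma> a))"
    proof (intro allI impI)
      fix B \<sigma> n f a assume h: "B \<subseteq> A \<and> card B = 2 \<and> bij_betw \<sigma> B (UNIV :: bool set)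
            \<and> f \<in> F \<and> fst f = n \<and> a \<in> tuples B n"
      show "snd f a = the_inv_into B \<sigma> (snd (T f) (map \<sigma> a))"
        unfolding T_def by (rule sigma_id) (use h in auto)
    qed
    show "r \<ge> 4 \<longrightarrow> T ` F = O1 \<and> (\<forall>f\<in>F. \<exists>i<fst f. \<forall>a\<in>tuples A (fst f).
            enat (card (set a)) < r \<longrightarrow> snd f a = a ! i)" by (rule part4)
  qed
qed


end
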